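(* Let $\lambda,\mu\in DP$ with $D_\mu\subseteq D_\lambda$. Then $c(T)\le c(T_{\lambda/\mu})$ in lexicographic order for all amenable tableaux $T$ of shape $D_{\lambda/\mu}$. Moreover, if $T$ is an amenable tableau of shape $D_{\lambda/\mu}$ with $c(T)=c(T_{\lambda/\mu})$, then $T^{(i)}=P_i(\lambda/\mu)$ for all $i$.
   Context: $DP$: partitions with distinct parts (including $\emptyset$). Shifted diagram $D_\lambda=\{(i,j):1\le i\le\ell(\lambda),\ i\le j\le i+\lambda_i-1\}$ (row $i$, column $j$); $D_{\lambda/\mu}=D_\lambda\setminus D_\mu$. Alphabet $\mathcal A=\{1'<1<2'<2<\cdots\}$, $|x|$ the unmarked version of a letter. A tableau of shape $D$ is $T:D\to\mathcal A$, weakly increasing along rows and down columns, each unmarked $k$ at most once per column, each marked $k'$ at most once per row; content $c(T)=(c_1,c_2,\dots)$, $c_i$ = number of entries $i$ or $i'$ (trailing zeros omitted). $T^{(i)}=\{(x,y):|T(x,y)|=i\}$. Reading word $w=w(T)=w_1\cdots w_n$: read rows left to right, from the bottom row to the top row. Statistics: $m_i(0)=0$; for $1\le j\le n$, $m_i(j)$ = number of letters $i$ in $w_{n-j+1}\cdots w_n$; for $n<j\le 2n$, $m_i(j)=m_i(n)+$ number of letters $i'$ in $w_1\cdots w_{j-n}$. For $k>1$, $w$ is $k$-amenable if: (a) for $0\le j\le n-1$, $m_k(j)=m_{k-1}(j)$ implies $w_{n-j}\notin\{k,k'\}$; (b) for $n\le j\le 2n-1$, $m_k(j)=m_{k-1}(j)$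 implies $w_{j-n+1}\notin\{k-1,k'\}$; (c) if $j$ is smallest with $w_j\in\{k',k\}$ then $w_j=k$; (d) if $j$ is smallest with $w_j\in\{(k-1)',k-1\}$ then $w_j=k-1$. $T$ is amenable if $w(T)$ is $k$-amenable for all $k>1$. The tableau $T_{\lambda/\mu}$: set $U_1=D_{\lambda/\mu}$; for $k=1,2,\dots$ let $P_k=\{(x,y)\in U_k:(x-1,y-1)\notin U_k\}$, set $T_{\lambda/\mu}(x,y)=k'$ if $(x+1,y)\in P_k$ and $=k$ otherwise for $(x,y)\in P_k$, and $U_{k+1}=U_k\setminus P_k$; write $P_k(\lambda/\mu)=P_k$. Lexicographic order on sequences: $\alpha\le\beta$ if $\alpha=\beta$ or there is $k$ with $\alpha_i=\beta_i$ for $i\le k$ and $\alpha_{k+1}<\beta_{k+1}$ (missing entries are $0$). *)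

theory Defs
  imports Main
begin

definition DP :: "nat list set" where
  "DP = {la. sorted_wrt (>) la \<and> 0 \<notin> set la}"

text \<open>Shifted diagram; rows and columns are 1-indexed, row i has cells i..i+la_i-1.\<close>
definition shifted_diagram :: "nat list \<Rightarrow> (nat \<times> nat) set" where
  "shifted_diagram la = {(i, j). 1 \<le> i \<and> i \<le> length la \<and> i \<le> j \<and> j < i + la ! (i - 1)}"

definition skew_diagram :: "nat list \<Rightarrow> nat list \<Rightarrow> (nat \<times> nat) set" where
  "skew_diagram la mu = shifted_diagram la - shifted_diagram mu"

datatype letter = Marked nat | Unmarked nat

fun absl :: "letter \<Rightarrow> nat" where
  "absl (Marked k) = k"
| "absl (Unmarked k) = k"

fun lrank :: "letter \<Rightarrow> nat" where
  "lrank (Marked k) = 2 * k"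
| "lrank (Unmarked k) = 2 * k + 1"

definition letter_le :: "letter \<Rightarrow> letter \<Rightarrow> bool" where
  "letter_le a b \<longleftrightarrow> lrank a \<le> lrank b"

definition valid_letter :: "letter \<Rightarrow> bool" where
  "valid_letter a \<longleftrightarrow> absl a \<ge> 1"

text \<open>A tableau of shape D: a map on cells (values outside D are irrelevant).\<close>
definition is_tableau :: "(nat \<times> nat) set \<Rightarrow> (nat \<times> nat \<Rightarrow> letter) \<Rightarrow> bool" where
  "is_tableau D T \<longleftrightarrow>
     (\<forall>c\<in>D. valid_letter (T c)) \<and>
     (\<forall>x y y'. (x, y) \<in> D \<and> (x, y') \<in> D \<and> y \<le> y' \<longrightarrow> letter_le (T (x, y)) (T (x, y'))) \<and>
     (\<forall>x x' y. (x, y) \<in> D \<and> (x', y) \<in> D \<and> x \<le> x' \<longrightarrow> letter_le (T (x, y)) (T (x', y))) \<and>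
     (\<forall>x x' y k. (x, y) \<in> D \<and> (x', y) \<in> D \<and> x \<noteq> x' \<and> T (x, y) = Unmarked k
         \<longrightarrow> T (x', y) \<noteq> Unmarked k) \<and>
     (\<forall>x y y' k. (x, y) \<in> D \<and> (x, y') \<in> D \<and> y \<noteq> y' \<and> T (x, y) = Marked k
         \<longrightarrow> T (x, y') \<noteq> Marked k)"

text \<open>Content c(T) as a function i \<mapsto> c_i (indices i \<ge> 1; trailing zeros implicit).\<close>
definition content :: "(nat \<times> nat) set \<Rightarrow> (nat \<times> nat \<Rightarrow> letter) \<Rightarrow> nat \<Rightarrow> nat" where
  "content D T i = card {c \<in> D. absl (T c) = i}"

definition tab_level :: "(nat \<times> nat) set \<Rightarrow> (nat \<times> nat \<Rightarrow> letter) \<Rightarrow> nat \<Rightarrow> (nat \<times> nat) set" where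
  "tab_level D T i = {c \<in> D. absl (T c) = i}"

definition lex_le :: "(nat \<Rightarrow> nat) \<Rightarrow> (nat \<Rightarrow> nat) \<Rightarrow> bool" where
  "lex_le a b \<longleftrightarrow> (\<forall>i\<ge>1. a i = b i) \<or>
     (\<exists>k. (\<forall>i. 1 \<le> i \<and> i \<le> k \<longrightarrow> a i = b i) \<and> a (Suc k) < b (Suc k))"

text \<open>Rows left to right, from the bottom row to the top row.\<close>
definition reading_word :: "(nat \<times> nat) set \<Rightarrow> (nat \<times> nat \<Rightarrow> letter) \<Rightarrow> letter list" where
  "reading_word D T = concat (map (\<lambda>x. map (\<lambda>y. T (x, y)) (sorted_list_of_set {y. (x, y) \<in> D}))
                                 (rev (sorted_list_of_set (fst ` D))))"

text \<open>m_i(j) for 0 \<le> j \<le> 2n (w is 0-indexed in Isabelle: w_j = w ! (j-1)).\<close>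
definition mstat :: "letter list \<Rightarrow> nat \<Rightarrow> nat \<Rightarrow> nat" where
  "mstat w i j = (if j \<le> length w then count_list (drop (length w - j) w) (Unmarked i)
     else count_list w (Unmarked i) + count_list (take (j - length w) w) (Marked i))"

definition k_amenable :: "nat \<Rightarrow> letter list \<Rightarrow> bool" where
  "k_amenable k w \<longleftrightarrow> (let n = length w in
     (\<forall>j < n. mstat w k j = mstat w (k - 1) j \<longrightarrow> w ! (n - j - 1) \<notin> {Unmarked k, Marked k}) \<and>
     (\<forall>j. n \<le> j \<and> j < 2 * n \<longrightarrow> mstat w k j = mstat w (k - 1) j \<longrightarrow>
          w ! (j - n) \<notin> {Unmarked (k - 1), Marked k}) \<and>
     (\<forall>j < n. w ! j \<in> {Marked k, Unmarked k} \<and> (\<forall>j' < j. w ! j' \<notin> {Marked k, Unmarked k})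
          \<longrightarrow> w ! j = Unmarked k) \<and>
     (\<forall>j < n. w ! j \<in> {Marked (k - 1), Unmarked (k - 1)} \<and>
          (\<forall>j' < j. w ! j' \<notin> {Marked (k - 1), Unmarked (k - 1)})
          \<longrightarrow> w ! j = Unmarked (k - 1)))"

definition amenable :: "(nat \<times> nat) set \<Rightarrow> (nat \<times> nat \<Rightarrow> letter) \<Rightarrow> bool" where
  "amenable D T \<longleftrightarrow> (\<forall>k > 1. k_amenable k (reading_word D T))"

definition peel :: "(nat \<times> nat) set \<Rightarrow> (nat \<times> nat) set" where
  "peel U = {(x, y) \<in> U. (x - 1, y - 1) \<notin> U}"

text \<open>Ustage D k = U_{k+1}.\<close>
primrec Ustage :: "(nat \<times> nat) set \<Rightarrow> nat \<Rightarrow> (nat \<times> nat) set" where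
  "Ustage D 0 = D"
| "Ustage D (Suc k) = Ustage D k - peel (Ustage D k)"

text \<open>Pset D k = P_k for k \<ge> 1.\<close>
definition Pset :: "(nat \<times> nat) set \<Rightarrow> nat \<Rightarrow> (nat \<times> nat) set" where
  "Pset D k = peel (Ustage D (k - 1))"

definition T_skew :: "(nat \<times> nat) set \<Rightarrow> nat \<times> nat \<Rightarrow> letter" where
  "T_skew D c = (let k = (LEAST k. 1 \<le> k \<and> c \<in> Pset D k) in
     (if (fst c + 1, snd c) \<in> Pset D k then Marked k else Unmarked k))"

end

theory Submission
  imports Defs
begin

lemma diag_cell:
  assumes "la \<in> DP" "(x,y) \<in> skew_diagram la mu" "(x+1,y+1) \<in> skew_diagram la mu"
  shows "(x,y+1) \<in> skew_diagram la mu"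
proof -
  from assms(2) have x1: "1 \<le> x" "x \<le> length la" "x \<le> y" "y < x + la!(x-1)"
    and nm: "(x,y) \<notin> shifted_diagram mu"
    by (auto simp: skew_diagram_def shifted_diagram_def)
  from assms(3) have x2: "x+1 \<le> length la" "y+1 < x+1+la!x"
    by (auto simp: skew_diagram_def shifted_diagram_def)
  have "la!(x-1) > la!x"
    using assms(1) x1(1) x2(1) unfolding DP_def sorted_wrt_iff_nth_less by auto
  then have "(x,y+1) \<in> shifted_diagram la"
    using x1 x2 by (auto simp: shifted_diagram_def)
  moreover have "(x,y+1) \<notin> shifted_diagram mu"
    using nm x1 by (auto simp: shifted_diagram_def)
  ultimately show ?thesis by (simp add: skew_diagram_def)
qed

lemma three_letters:
  "letter_le a b \<Longrightarrow> letter_le b c \<Longrightarrow> (\<forall>k. b = Unmarked k \<longrightarrow> c \<noteq> Unmarked k)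
   \<Longrightarrow> (\<forall>k. b = Marked k \<longrightarrow> a \<noteq> Marked k) \<Longrightarrow> absl a < absl c"
  by (cases a; cases b; cases c; auto simp: letter_le_def; presburger)

lemma diag_lt:
  assumes "la \<in> DP" "is_tableau (skew_diagram la mu) T"
    "(x,y) \<in> skew_diagram la mu" "(x+1,y+1) \<in> skew_diagram la mu"
  shows "absl (T (x,y)) < absl (T (x+1,y+1))"
proof -
  have b: "(x,y+1) \<in> skew_diagram la mu" using diag_cell assms(1,3,4) by blast
  have tb: "is_tableau (skew_diagram la mu) T" by (rule assms(2))
  note defs = tb[unfolded is_tableau_def]
  have r1: "letter_le (T (x,y)) (T (x,y+1))"
  proof -
    have "\<forall>x y y'. (x, y) \<in> skew_diagram la mu \<and> (x, y') \<in> skew_diagram la mu \<and> y \<le> y'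
       \<longrightarrow> letter_le (T (x, y)) (T (x, y'))" using defs by blast
    then show ?thesis using assms(3) b by auto
  qed
  have r2: "letter_le (T (x,y+1)) (T (x+1,y+1))"
  proof -
    have "\<forall>x x' y. (x, y) \<in> skew_diagram la mu \<and> (x', y) \<in> skew_diagram la mu \<and> x \<le> x'
       \<longrightarrow> letter_le (T (x, y)) (T (x', y))" using defs by blast
    then show ?thesis using assms(4) b by auto
  qed
  have r3: "\<forall>k. T (x,y+1) = Unmarked k \<longrightarrow> T (x+1,y+1) \<noteq> Unmarked k"
  proof (intro allI impI)
    fix k assume "T (x,y+1) = Unmarked k"
    then show "T (x+1,y+1) \<noteq> Unmarked k"
    proof -
      have col: "\<forall>x x' y k. (x, y) \<in> skew_diagram la mu \<and> (x', y) \<in> skew_diagram la mu \<and> x \<noteq> x'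
         \<and> T (x, y) = Unmarked k \<longrightarrow> T (x', y) \<noteq> Unmarked k" using defs by blast
      show ?thesis using col[rule_format, of x "y+1" "x+1" k] b assms(4) \<open>T (x,y+1) = Unmarked k\<close> by simp
    qed
  qed
  have r4: "\<forall>k. T (x,y+1) = Marked k \<longrightarrow> T (x,y) \<noteq> Marked k"
  proof (intro allI impI)
    fix k assume "T (x,y+1) = Marked k"
    then show "T (x,y) \<noteq> Marked k"
    proof -
      have row: "\<forall>x y y' k. (x, y) \<in> skew_diagram la mu \<and> (x, y') \<in> skew_diagram la mu \<and> y \<noteq> y'
         \<and> T (x, y) = Marked k \<longrightarrow> T (x, y') \<noteq> Marked k" using defs by blast
      show ?thesis using row[rule_format, of x "y+1" y k] b assms(3) \<open>T (x,y+1) = Marked k\<close> by simp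
    qed
  qed
  show ?thesis using three_letters[OF r1 r2 r3 r4] .
qed

lemma Ustage_sub: "Ustage D k \<subseteq> D"
  by (induction k) auto

lemma Ustage_anti: "k \<le> n \<Longrightarrow> Ustage D n \<subseteq> Ustage D k"
  using lift_Suc_antimono_le[of "Ustage D"] by auto


lemma Ustage_Suc_mem:
  "c \<in> Ustage D (Suc k) \<longleftrightarrow> c \<in> Ustage D k \<and> (fst c - 1, snd c - 1) \<in> Ustage D k"
  by (cases c) (auto simp: peel_def)

lemma Pset_mem:
  assumes "1 \<le> k"
  shows "c \<in> Pset D k \<longleftrightarrow> c \<in> Ustage D (k-1) \<and> c \<notin> Ustage D k"
proof -
  obtain m where k: "k = Suc m" using assms by (cases k) auto
  show ?thesis unfolding k Pset_def by (auto simp: peel_def)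
qed

lemma Ustage_fst:
  "c \<in> Ustage (skew_diagram la mu) k \<Longrightarrow> fst c \<ge> k+1"
proof (induction k arbitrary: c)
  case 0
  then show ?case by (auto simp: skew_diagram_def shifted_diagram_def)
next
  case (Suc k)
  then have "(fst c - 1, snd c - 1) \<in> Ustage (skew_diagram la mu) k"
    using Ustage_Suc_mem by blast
  from Suc.IH[OF this] show ?case by simp
qed

lemma level_exists:
  assumes "c \<in> D" "c \<notin> Ustage D n"
  shows "\<exists>L\<ge>1. c \<in> Ustage D (L-1) \<and> c \<notin> Ustage D L"
proof -
  define L where "L = (LEAST n. c \<notin> Ustage D n)"
  have nL: "c \<notin> Ustage D L" unfolding L_def by (rule LeastI[of _ n]) (rule assms(2))
  have "L \<noteq> 0"
  proof
    assume "L = 0" then show False using nL assms(1) by simp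
  qed
  moreover have "c \<in> Ustage D (L-1)"
  proof (rule ccontr)
    assume "c \<notin> Ustage D (L-1)"
    then have "L \<le> L - 1" unfolding L_def by (rule Least_le)
    then show False using \<open>L \<noteq> 0\<close> by simp
  qed
  ultimately show ?thesis using nL by (intro exI[of _ L]) auto
qed

lemma Tskew_absl:
  assumes "1 \<le> L" "c \<in> Ustage D (L-1)" "c \<notin> Ustage D L"
  shows "absl (T_skew D c) = L"
proof -
  have "(LEAST k. 1 \<le> k \<and> c \<in> Pset D k) = L"
  proof (rule Least_equality)
    show "1 \<le> L \<and> c \<in> Pset D L" using assms Pset_mem by blast
    fix k assume k: "1 \<le> k \<and> c \<in> Pset D k"
    show "L \<le> k"
    proof (rule ccontr)
      assume "\<not> L \<le> k"
      then have "Ustage D (L-1) \<subseteq> Ustage D k" by (intro Ustage_anti) simp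
      then show False using k assms(2) Pset_mem by blast
    qed
  qed
  then show ?thesis unfolding T_skew_def Let_def by simp
qed

lemma finite_skew: "finite (skew_diagram la mu)"
proof -
  have "shifted_diagram la \<subseteq> {..length la} \<times> {..length la + sum_list la}"
  proof
    fix c assume "c \<in> shifted_diagram la"
    then obtain i j where c: "c = (i,j)" "1 \<le> i" "i \<le> length la" "j < i + la!(i-1)"
      by (auto simp: shifted_diagram_def)
    have "la!(i-1) \<le> sum_list la" using c by (intro elem_le_sum_list) auto
    then show "c \<in> {..length la} \<times> {..length la + sum_list la}" using c by auto
  qed
  then have "finite (shifted_diagram la)" by (rule finite_subset) auto
  then show ?thesis unfolding skew_diagram_def by auto
qed

lemma card_prefix:
  assumes "finite D" "\<forall>c\<in>D. absl (S c) \<ge> 1"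
  shows "card {c\<in>D. absl (S c) \<le> i} = (\<Sum>j=1..i. content D S j)"
proof (induction i)
  case 0
  have e0: "{c\<in>D. absl (S c) \<le> 0} = {}" using assms(2) by force
  have "card {c\<in>D. absl (S c) \<le> 0} = 0" by (simp only: e0 card.empty)
  then show ?case by simp
next
  case (Suc i)
  have e: "{c\<in>D. absl (S c) \<le> Suc i} = {c\<in>D. absl (S c) \<le> i} \<union> {c\<in>D. absl (S c) = Suc i}"
    by auto
  have "card {c\<in>D. absl (S c) \<le> Suc i} = card {c\<in>D. absl (S c) \<le> i} + card {c\<in>D. absl (S c) = Suc i}"
    unfolding e using assms(1) by (intro card_Un_disjoint) auto
  then show ?case using Suc by (simp add: content_def)
qed

lemma lex_from_sums:
  assumes "\<forall>i. (\<Sum>j=1..i. a j) \<le> (\<Sum>j=1..i. (b j::nat))"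
  shows "lex_le a b"
proof (rule ccontr)
  assume nl: "\<not> lex_le a b"
  then have ex: "\<exists>i. 1 \<le> i \<and> a i \<noteq> b i" unfolding lex_le_def by auto
  define i0 where "i0 = (LEAST i. 1 \<le> i \<and> a i \<noteq> b i)"
  have i0: "1 \<le> i0 \<and> a i0 \<noteq> b i0" unfolding i0_def by (rule LeastI_ex[OF ex])
  have eq: "\<forall>i. 1 \<le> i \<and> i \<le> i0 - 1 \<longrightarrow> a i = b i"
  proof (intro allI impI)
    fix i assume "1 \<le> i \<and> i \<le> i0 - 1"
    then have "i < i0" using i0 by auto
    then show "a i = b i" unfolding i0_def using not_less_Least \<open>1 \<le> i \<and> i \<le> i0 - 1\<close> by blast
  qed
  have "\<not> a i0 < b i0"
  proof
    assume "a i0 < b i0"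
    then have "lex_le a b" unfolding lex_le_def using eq i0
      by (intro disjI2 exI[of _ "i0 - 1"]) auto
    then show False using nl by simp
  qed
  then have gt: "a i0 > b i0" using i0 by auto
  obtain m where m: "i0 = Suc m" using i0 by (cases i0) auto
  have s: "(\<Sum>j=1..m. a j) = (\<Sum>j=1..m. b j)"
    using eq m by (intro sum.cong) auto
  have "(\<Sum>j=1..i0. a j) > (\<Sum>j=1..i0. b j)"
    using s gt m by simp
  then show False using assms by (meson not_le)
qed

theorem lemma3p4:
  fixes la mu :: "nat list"
  assumes "la \<in> DP" and "mu \<in> DP"
    and "shifted_diagram mu \<subseteq> shifted_diagram la"
  shows "(\<forall>T. is_tableau (skew_diagram la mu) T \<and> amenable (skew_diagram la mu) T
            \<longrightarrow> lex_le (content (skew_diagram la mu) T)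
                       (content (skew_diagram la mu) (T_skew (skew_diagram la mu))))
       \<and> (\<forall>T. is_tableau (skew_diagram la mu) T \<and> amenable (skew_diagram la mu) T
            \<and> content (skew_diagram la mu) T
                = content (skew_diagram la mu) (T_skew (skew_diagram la mu))
            \<longrightarrow> (\<forall>i\<ge>1. tab_level (skew_diagram la mu) T i = Pset (skew_diagram la mu) i))"
proof -
  define D where "D = skew_diagram la mu"
  define S where "S = T_skew D"
  have fin: "finite D" unfolding D_def by (rule finite_skew)
  have lev: "\<exists>L\<ge>1. c \<in> Ustage D (L-1) \<and> c \<notin> Ustage D L" if "c \<in> D" for c
  proof -
    have "c \<notin> Ustage D (fst c)" using Ustage_fst[of c la mu "fst c"] unfolding D_def by auto
    then show ?thesis using level_exists that by blast
  qed
  have Sle: "absl (S c) \<le> i \<longleftrightarrow> c \<notin> Ustage D i" if cD: "c \<in> D" for c i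
  proof -
    obtain L where L: "L \<ge> 1" "c \<in> Ustage D (L-1)" "c \<notin> Ustage D L" using lev[OF cD] by blast
    have a: "absl (S c) = L" unfolding S_def using Tskew_absl L by blast
    show ?thesis
    proof
      assume "absl (S c) \<le> i"
      then have "Ustage D i \<subseteq> Ustage D L" using a by (intro Ustage_anti) simp
      then show "c \<notin> Ustage D i" using L by blast
    next
      assume "c \<notin> Ustage D i"
      show "absl (S c) \<le> i"
      proof (rule ccontr)
        assume "\<not> absl (S c) \<le> i"
        then have "Ustage D (L-1) \<subseteq> Ustage D i" using a by (intro Ustage_anti) simp
        then show False using L \<open>c \<notin> Ustage D i\<close> by blast
      qed
    qed
  qed
  have Svalid: "\<forall>c\<in>D. absl (S c) \<ge> 1"
  proof
    fix c assume "c \<in> D"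
    then show "absl (S c) \<ge> 1" using Sle[of c 0] by auto
  qed
  have Tbig: "absl (T c) \<ge> k + 1" if tab: "is_tableau D T" and "c \<in> Ustage D k" for T c k
    using that(2)
  proof (induction k arbitrary: c)
    case 0
    then show ?case using tab unfolding is_tableau_def valid_letter_def by auto
  next
    case (Suc k)
    define c' where "c' = (fst c - 1, snd c - 1)"
    have c1: "c \<in> Ustage D k" "c' \<in> Ustage D k" using Suc.prems Ustage_Suc_mem c'_def by blast+
    have c'D: "c' \<in> D" "c \<in> D" using c1 Ustage_sub by blast+
    then have "fst c' \<ge> 1" "snd c' \<ge> fst c'"
      unfolding D_def by (auto simp: skew_diagram_def shifted_diagram_def)
    then have ceq: "c = (fst c' + 1, snd c' + 1)" unfolding c'_def by auto
    have "absl (T c') < absl (T c)"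
      using diag_lt[OF assms(1), of mu T "fst c'" "snd c'"] c'D tab ceq unfolding D_def by simp
    then show ?case using Suc.IH[OF c1(2)] by simp
  qed
  have sub: "{c\<in>D. absl (T c) \<le> i} \<subseteq> {c\<in>D. absl (S c) \<le> i}" if tab: "is_tableau D T" for T i
  proof
    fix c assume c: "c \<in> {c\<in>D. absl (T c) \<le> i}"
    have "c \<notin> Ustage D i" using Tbig[OF tab, of c i] c by auto
    then show "c \<in> {c\<in>D. absl (S c) \<le> i}" using Sle c by auto
  qed
  have Tvalid: "\<forall>c\<in>D. absl (T c) \<ge> 1" if "is_tableau D T" for T
    using that unfolding is_tableau_def valid_letter_def by auto
  have sums: "(\<Sum>j=1..i. content D T j) \<le> (\<Sum>j=1..i. content D S j)" if tab: "is_tableau D T" for T i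
  proof -
    have "card {c\<in>D. absl (T c) \<le> i} \<le> card {c\<in>D. absl (S c) \<le> i}"
      using sub[OF tab] fin by (intro card_mono) auto
    then show ?thesis using card_prefix[OF fin Tvalid[OF tab]] card_prefix[OF fin Svalid] by simp
  qed
  have part1: "lex_le (content D T) (content D S)" if "is_tableau D T" for T
    using lex_from_sums sums[OF that] by blast
  have part2: "tab_level D T i = Pset D i"
    if tab: "is_tableau D T" and ceq: "content D T = content D S" and i: "i \<ge> 1" for T i
  proof -
    have A: "{c\<in>D. absl (T c) \<le> n} = {c\<in>D. c \<notin> Ustage D n}" for n
    proof -
      have "card {c\<in>D. absl (T c) \<le> n} = card {c\<in>D. absl (S c) \<le> n}"
        using card_prefix[OF fin Tvalid[OF tab]] card_prefix[OF fin Svalid] ceq by simp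
      then have "{c\<in>D. absl (T c) \<le> n} = {c\<in>D. absl (S c) \<le> n}"
        using sub[OF tab] fin by (intro card_subset_eq) auto
      also have "\<dots> = {c\<in>D. c \<notin> Ustage D n}" using Sle by auto
      finally show ?thesis .
    qed
    show ?thesis
    proof (intro set_eqI iffI)
      fix c assume "c \<in> tab_level D T i"
      then have c: "c \<in> D" "absl (T c) = i" by (auto simp: tab_level_def)
      then have "c \<notin> Ustage D i" using A[of i] by blast
      moreover have "c \<in> Ustage D (i-1)"
      proof -
        have "c \<notin> {ca\<in>D. absl (T ca) \<le> i-1}" using c i by auto
        then show ?thesis using A[of "i-1"] c by blast
      qed
      ultimately show "c \<in> Pset D i" using Pset_mem i by blast
    next
      fix c assume "c \<in> Pset D i"
      then have c: "c \<in> Ustage D (i-1)" "c \<notin> Ustage D i" using Pset_mem i by blast+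
      then have cD: "c \<in> D" using Ustage_sub by blast
      have "absl (T c) \<le> i" using A[of i] c cD by blast
      moreover have "\<not> absl (T c) \<le> i - 1" using A[of "i-1"] c cD by blast
      ultimately show "c \<in> tab_level D T i" using cD i by (auto simp: tab_level_def)
    qed
  qed
  show ?thesis using part1 part2 unfolding D_def[symmetric] S_def[symmetric] by blast
qed

end
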